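(* Let $(V_1,V_2)$ be a pair of commuting isometries on a Hilbert space with $\operatorname{ran}V_1=\operatorname{ran}V_2$. If $V_1V_2$ is pure, then both $V_1$ and $V_2$ are pure.
   Context: An isometry $T$ is pure if $T^{*n}\to0$ strongly as $n\to\infty$ (equivalently, $T$ is a unilateral shift of some multiplicity). *)

theory Defs
  imports "HOL-Analysis.Analysis"
begin

definition isometry :: "('a::real_normed_vector \<Rightarrow> 'a) \<Rightarrow> bool" where
  "isometry T \<longleftrightarrow> bounded_linear T \<and> (\<forall>x. norm (T x) = norm x)"

definition is_adjoint :: "('a::real_inner \<Rightarrow> 'a) \<Rightarrow> ('a \<Rightarrow> 'a) \<Rightarrow> bool" where
  "is_adjoint T S \<longleftrightarrow> (\<forall>x y. inner (T x) y = inner x (S y))"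

definition pure_isometry :: "('a::real_inner \<Rightarrow> 'a) \<Rightarrow> bool" where
  "pure_isometry T \<longleftrightarrow> isometry T \<and>
     (\<exists>S. is_adjoint T S \<and> (\<forall>x. (\<lambda>n. (S ^^ n) x) \<longlonglongrightarrow> 0))"

end

theory Submission
  imports Defs
begin

lemma isometry_inner:
  assumes "isometry T" shows "inner (T x) (T y) = inner x y"
proof -
  have bl: "bounded_linear T" and n: "\<And>x. norm (T x) = norm x" using assms by (auto simp: isometry_def)
  have "norm (T (x + y))^2 = norm (x+y)^2" using n by simp
  hence "norm (T x + T y)^2 = norm (x+y)^2" using bl by (simp add: linear_simps)
  hence "inner (T x + T y) (T x + T y) = inner (x+y) (x+y)" by (simp add: power2_norm_eq_inner)
  moreover have "inner (T x) (T x) = inner x x" "inner (T y) (T y) = inner y y"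
    using n by (simp_all flip: power2_norm_eq_inner)
  ultimately show ?thesis by (simp add: inner_add inner_commute)
qed

lemma isometry_closed_range:
  fixes T :: "'a::{real_inner, complete_space} \<Rightarrow> 'a"
  assumes "isometry T" shows "closed (range T)"
proof -
  have bl: "bounded_linear T" and n: "\<And>x. norm (T x) = norm x" using assms by (auto simp: isometry_def)
  have "complete (T ` UNIV)"
    by (rule complete_isometric_image[of 1]) (auto simp: bl n complete_UNIV subspace_UNIV)
  thus ?thesis by (simp add: complete_imp_closed)
qed

lemma parallelogram:
  fixes u v :: "'a::real_inner"
  shows "norm (u - v)^2 + norm (u + v)^2 = 2 * norm u ^2 + 2 * norm v ^2"
  by (simp add: power2_norm_eq_inner inner_add inner_diff inner_commute)

lemma proj_exists:
  fixes M :: "'a::{real_inner, complete_space} set"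
  assumes sub: "subspace M" and cl: "closed M"
  shows "\<exists>p\<in>M. \<forall>m\<in>M. inner (x - p) m = 0"
proof -
  define D where "D = {(norm (x - m))^2 | m. m \<in> M}"
  define d where "d = Inf D"
  have "0 \<in> M" using sub by (simp add: subspace_0)
  hence Dne: "D \<noteq> {}" unfolding D_def by auto
  have bdd: "bdd_below D" unfolding D_def by (rule bdd_belowI[of _ 0]) auto
  have low: "d \<le> (norm (x - m))^2" if "m \<in> M" for m
    unfolding d_def by (rule cInf_lower) (use that bdd in \<open>auto simp: D_def\<close>)
  have "\<exists>m\<in>M. (norm (x - m))^2 < d + 1 / (real n + 1)" for n
  proof -
    have "Inf D < d + 1 / (real n + 1)" unfolding d_def by simp
    then obtain y where "y \<in> D" "y < d + 1 / (real n + 1)" using cInf_lessD[OF Dne] by blast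
    thus ?thesis unfolding D_def by auto
  qed
  then obtain ms where ms: "\<And>n. ms n \<in> M" "\<And>n. (norm (x - ms n))^2 < d + 1 / (real n + 1)"
    by metis
  have key: "(norm (ms a - ms b))^2 \<le> 2 / (real a + 1) + 2 / (real b + 1)" for a b
  proof -
    have mid: "(1/2) *\<^sub>R (ms a + ms b) \<in> M"
      using sub ms(1) by (simp add: subspace_add subspace_scale)
    have eq: "norm ((x - ms a) - (x - ms b))^2 + norm ((x - ms a) + (x - ms b))^2
       = 2 * norm (x - ms a)^2 + 2 * norm (x - ms b)^2" by (rule parallelogram)
    have "(x - ms a) + (x - ms b) = 2 *\<^sub>R (x - (1/2) *\<^sub>R (ms a + ms b))"
      by (simp add: algebra_simps scaleR_2)
    hence "norm ((x - ms a) + (x - ms b))^2 = 4 * norm (x - (1/2) *\<^sub>R (ms a + ms b))^2"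
      by (simp add: power2_eq_square)
    moreover have "norm ((x - ms a) - (x - ms b))^2 = norm (ms a - ms b)^2"
      by (simp add: norm_minus_commute)
    moreover have "2 / (real a + 1) = 2 * (1 / (real a + 1))" "2 / (real b + 1) = 2 * (1 / (real b + 1))" by simp_all
    ultimately show ?thesis using eq low[OF mid] ms(2)[of a] ms(2)[of b] by linarith
  qed
  have "Cauchy ms"
  proof (rule metric_CauchyI)
    fix e :: real assume e: "e > 0"
    obtain N :: nat where N: "4 / e^2 < real N" using reals_Archimedean2 by blast
    have "4 / (real N + 1) < e^2"
      using N e by (simp add: field_simps) (metis add_pos_pos zero_less_power less_add_same_cancel2 order.strict_trans add.commute)
    show "\<exists>M. \<forall>m\<ge>M. \<forall>n\<ge>M. dist (ms m) (ms n) < e"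
    proof (intro exI allI impI)
      fix a b assume ab: "N \<le> a" "N \<le> b"
      have "2 / (real a + 1) \<le> 2 / (real N + 1)" "2 / (real b + 1) \<le> 2 / (real N + 1)"
        using ab by (simp_all add: frac_le)
      hence "(dist (ms a) (ms b))^2 < e^2"
        using key[of a b] \<open>4 / (real N + 1) < e^2\<close> by (simp add: dist_norm)
      thus "dist (ms a) (ms b) < e" using e by (simp add: power_less_imp_less_base)
    qed
  qed
  then obtain p where p: "ms \<longlonglongrightarrow> p" using Cauchy_convergent_iff convergent_def by blast
  have pM: "p \<in> M" using closed_sequentially[OF cl] ms(1) p by blast
  have "(norm (x - p))^2 \<le> d"
  proof (rule LIMSEQ_le)
    show "(\<lambda>n. (norm (x - ms n))^2) \<longlonglongrightarrow> (norm (x - p))^2"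
      by (intro tendsto_intros p)
    have "(\<lambda>n. 1 / (real n + 1)) \<longlonglongrightarrow> 0" using LIMSEQ_inverse_real_of_nat by (simp add: inverse_eq_divide add.commute[of _ 1])
    hence "(\<lambda>n. d + 1 / (real n + 1)) \<longlonglongrightarrow> d + 0" by (intro tendsto_intros)
    thus "(\<lambda>n. d + 1 / (real n + 1)) \<longlonglongrightarrow> d" by simp
    show "\<exists>N. \<forall>n\<ge>N. (norm (x - ms n))^2 \<le> d + 1 / (real n + 1)" using ms(2) less_imp_le by blast
  qed
  have "inner (x - p) m = 0" if mM: "m \<in> M" for m
  proof (cases "m = 0")
    case True thus ?thesis by simp
  next
    case False
    define a where "a = inner (x - p) m"
    define t where "t = a / (norm m)^2"
    have nm: "(norm m)^2 > 0" using False by simp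
    have "p + t *\<^sub>R m \<in> M" using sub pM mM by (simp add: subspace_add subspace_scale)
    hence "(norm (x - p))^2 \<le> (norm ((x - p) - t *\<^sub>R m))^2"
      using low \<open>(norm (x - p))^2 \<le> d\<close> by (metis diff_diff_add order_trans)
    also have "\<dots> = (norm (x - p))^2 - 2 * t * a + t^2 * (norm m)^2"
      unfolding power2_norm_eq_inner a_def by (simp add: inner_diff_left inner_diff_right inner_commute power2_eq_square algebra_simps)
    also have "\<dots> = (norm (x - p))^2 - a^2 / (norm m)^2"
      using nm by (simp add: t_def power2_eq_square field_simps)
    finally have "a^2 / (norm m)^2 \<le> 0" by simp
    hence "a^2 \<le> 0" using nm by (simp add: divide_le_0_iff)
    thus ?thesis unfolding a_def by simp
  qed
  thus ?thesis using pM by blast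
qed

lemma isometry_adjoint_exists:
  fixes T :: "'a::{real_inner, complete_space} \<Rightarrow> 'a"
  assumes iso: "isometry T" shows "\<exists>S. is_adjoint T S"
proof -
  have bl: "bounded_linear T" using iso by (simp add: isometry_def)
  have sub: "subspace (range T)"
    using linear_subspace_image[OF bounded_linear.linear[OF bl] subspace_UNIV] .
  have "\<exists>u. \<forall>y. inner (x - T u) (T y) = 0" for x
    using proj_exists[OF sub isometry_closed_range[OF iso], of x] by auto
  then obtain S where S: "\<And>x y. inner (x - T (S x)) (T y) = 0" by metis
  have "inner (T x) y = inner x (S y)" for x y
  proof -
    have "inner (T x) y = inner (T x) (T (S y)) + inner (T x) (y - T (S y))"
      by (simp add: inner_diff_right)
    moreover have "inner (T x) (y - T (S y)) = 0" using S[of y x] by (simp add: inner_commute)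
    ultimately show ?thesis using isometry_inner[OF iso] by simp
  qed
  thus ?thesis unfolding is_adjoint_def by blast
qed

lemma adj_left_inv:
  assumes iso: "isometry T" and adj: "is_adjoint T S" shows "S (T x) = x"
proof -
  have "inner y (S (T x) - x) = 0" for y
    using adj isometry_inner[OF iso, of y x] unfolding is_adjoint_def
    by (metis inner_diff_right diff_self)
  from this[of "S (T x) - x"] show ?thesis by simp
qed

lemma adj_orth:
  assumes iso: "isometry T" and adj: "is_adjoint T S" shows "inner (x - T (S x)) (T y) = 0"
proof -
  have "inner x (T y) = inner y (S x)" using adj unfolding is_adjoint_def by (metis inner_commute)
  moreover have "inner (T (S x)) (T y) = inner y (S x)" using isometry_inner[OF iso] by (simp add: inner_commute)
  ultimately show ?thesis by (simp add: inner_diff_left)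
qed

lemma adj_norm:
  assumes iso: "isometry T" and adj: "is_adjoint T S" shows "norm (S x) \<le> norm x"
proof -
  have n: "norm (T (S x)) = norm (S x)" using iso by (simp add: isometry_def)
  have "norm (S x)^2 = inner (T (S x)) x"
    using adj unfolding is_adjoint_def by (simp add: power2_norm_eq_inner)
  also have "\<dots> \<le> norm (S x) * norm x" using Cauchy_Schwarz_ineq2[of "T (S x)" x] n by simp
  finally have "norm (S x) * norm (S x) \<le> norm (S x) * norm x" by (simp add: power2_eq_square)
  thus ?thesis by (cases "norm (S x) = 0") auto
qed

lemma isometry_comp: "isometry A \<Longrightarrow> isometry B \<Longrightarrow> isometry (A \<circ> B)"
  unfolding isometry_def by (auto simp: comp_def intro: bounded_linear_compose)

lemma adjoint_comp: "is_adjoint A SA \<Longrightarrow> is_adjoint B SB \<Longrightarrow> is_adjoint (A \<circ> B) (SB \<circ> SA)"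
  unfolding is_adjoint_def by simp

lemma isometry_id: "isometry id"
  unfolding isometry_def by (simp add: bounded_linear_ident[unfolded id_def[symmetric]])

lemma isometry_pow: "isometry T \<Longrightarrow> isometry (T ^^ n)"
  by (induction n) (simp_all add: isometry_id isometry_comp)

lemma adjoint_pow: "is_adjoint T S \<Longrightarrow> is_adjoint (T ^^ n) (S ^^ n)"
proof (induction n)
  case 0 thus ?case by (simp add: is_adjoint_def)
next
  case (Suc n)
  have "is_adjoint (T \<circ> T ^^ n) (S ^^ n \<circ> S)" using adjoint_comp[OF Suc.prems Suc.IH[OF Suc.prems]] .
  moreover have "T ^^ Suc n = T \<circ> T ^^ n" by simp
  moreover have "S ^^ Suc n = S ^^ n \<circ> S" by (rule funpow_Suc_right)
  ultimately show ?case by metis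
qed

lemma same_range_norm:
  fixes A B :: "'a::real_inner \<Rightarrow> 'a"
  assumes isoA: "isometry A" and adjA: "is_adjoint A SA"
    and isoB: "isometry B" and adjB: "is_adjoint B SB" and rg: "range A = range B"
  shows "norm (SA x) = norm (SB x)"
proof -
  have blA: "bounded_linear A" using isoA by (simp add: isometry_def)
  obtain c where c: "B (SB x) = A c" using rg by (metis rangeI image_iff)
  define d where "d = A (SA x) - B (SB x)"
  have dA: "d = A (SA x - c)" unfolding d_def c using blA by (simp add: linear_simps)
  have o1: "inner (x - A (SA x)) (A y) = 0" for y using adj_orth[OF isoA adjA] .
  have o2: "inner (x - B (SB x)) (A y) = 0" for y
  proof -
    obtain z where "A y = B z" using rg by (metis rangeI image_iff)
    thus ?thesis using adj_orth[OF isoB adjB] by simp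
  qed
  have "d = (x - B (SB x)) - (x - A (SA x))" unfolding d_def by simp
  hence "inner d (A y) = 0" for y using o1[of y] o2[of y] by (simp add: inner_diff_left)
  from this[of "SA x - c"] have "inner d d = 0" using dA by simp
  hence "A (SA x) = B (SB x)" unfolding d_def by simp
  thus ?thesis using isoA isoB by (metis isometry_def)
qed

lemma comm_pow_pt: "(\<And>x. f (g x) = g (f x)) \<Longrightarrow> f ((g ^^ n) x) = (g ^^ n) (f x)"
  by (induction n) simp_all

lemma comm_pow: "f \<circ> g = g \<circ> f \<Longrightarrow> f \<circ> g ^^ n = g ^^ n \<circ> f"
proof -
  assume "f \<circ> g = g \<circ> f"
  hence "\<And>x. f (g x) = g (f x)" by (metis comp_apply)
  thus ?thesis using comm_pow_pt[of f g n] by (simp add: fun_eq_iff)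
qed

lemma prod_pow: "f \<circ> g = g \<circ> f \<Longrightarrow> (f \<circ> g) ^^ n = f ^^ n \<circ> g ^^ n"
proof -
  assume "f \<circ> g = g \<circ> f"
  hence c: "\<And>x. g (f x) = f (g x)" by (metis comp_apply)
  have "((f \<circ> g) ^^ n) x = (f ^^ n) ((g ^^ n) x)" for x
  proof (induction n)
    case 0 thus ?case by simp
  next
    case (Suc n)
    have "((f \<circ> g) ^^ Suc n) x = f (g ((f ^^ n) ((g ^^ n) x)))" using Suc by (simp add: comp_def)
    also have "\<dots> = f ((f ^^ n) (g ((g ^^ n) x)))" using comm_pow_pt[of g f n, OF c] by simp
    also have "\<dots> = (f ^^ Suc n) ((g ^^ Suc n) x)" by simp
    finally show ?case .
  qed
  thus ?thesis by (simp add: fun_eq_iff)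
qed

lemma range_pow:
  assumes c: "V1 \<circ> V2 = V2 \<circ> V1" and r: "range V1 = range V2"
  shows "range (V2 ^^ n) = range (V1 ^^ n)"
proof (induction n)
  case 0 thus ?case by simp
next
  case (Suc n)
  have "range (V2 ^^ Suc n) = (V2 ^^ n) ` range V2" by (simp only: funpow_Suc_right image_comp)
  also have "\<dots> = (V2 ^^ n) ` range V1" using r by simp
  also have "\<dots> = range (V2 ^^ n \<circ> V1)" by (simp only: image_comp)
  also have "\<dots> = range (V1 \<circ> V2 ^^ n)" using comm_pow[OF c] by simp
  also have "\<dots> = V1 ` range (V2 ^^ n)" by (simp only: image_comp)
  also have "\<dots> = V1 ` range (V1 ^^ n)" using Suc by simp
  also have "\<dots> = range (V1 ^^ Suc n)" by (simp only: funpow.simps(2) image_comp)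
  finally show ?case .
qed

lemma pure_one:
  fixes V1 V2 :: "'a::{real_inner, complete_space} \<Rightarrow> 'a"
  assumes iso1: "isometry V1" and iso2: "isometry V2"
    and c: "V1 \<circ> V2 = V2 \<circ> V1"
    and r: "range V1 = range V2"
    and p: "pure_isometry (V1 \<circ> V2)"
  shows "pure_isometry V1"
proof -
  obtain S where adjW: "is_adjoint (V1 \<circ> V2) S" and lim: "\<And>x. (\<lambda>n. (S ^^ n) x) \<longlonglongrightarrow> 0"
    using p unfolding pure_isometry_def by blast
  obtain S1 where adj1: "is_adjoint V1 S1" using isometry_adjoint_exists[OF iso1] by blast
  have isoW: "isometry (V1 \<circ> V2)" using isometry_comp[OF iso1 iso2] .
  have rg: "range (V1 ^^ (n + n)) = range ((V1 \<circ> V2) ^^ n)" for n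
  proof -
    have "range ((V1 \<circ> V2) ^^ n) = (V1 ^^ n) ` range (V2 ^^ n)"
      by (simp add: prod_pow[OF c] image_comp)
    also have "\<dots> = (V1 ^^ n) ` range (V1 ^^ n)" using range_pow[OF c r] by simp
    also have "\<dots> = range (V1 ^^ (n + n))" by (simp add: funpow_add image_comp)
    finally show ?thesis by simp
  qed
  have eqn: "norm ((S1 ^^ (n + n)) x) = norm ((S ^^ n) x)" for n x
    by (rule same_range_norm[OF isometry_pow[OF iso1] adjoint_pow[OF adj1]
          isometry_pow[OF isoW] adjoint_pow[OF adjW] rg])
  have dec: "norm ((S1 ^^ k) x) \<le> norm ((S1 ^^ m) x)" if "m \<le> k" for m k x
    using that
  proof (induction k rule: dec_induct)
    case base thus ?case by simp
  next
    case (step k)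
    have "norm ((S1 ^^ Suc k) x) \<le> norm ((S1 ^^ k) x)" using adj_norm[OF iso1 adj1] by simp
    thus ?case using step.IH by linarith
  qed
  have "(\<lambda>n. (S1 ^^ n) x) \<longlonglongrightarrow> 0" for x
  proof (rule LIMSEQ_I)
    fix r :: real assume "0 < r"
    then obtain N where N: "\<And>n. n \<ge> N \<Longrightarrow> norm ((S ^^ n) x - 0) < r"
      using LIMSEQ_D[OF lim] by blast
    show "\<exists>no. \<forall>n\<ge>no. norm ((S1 ^^ n) x - 0) < r"
    proof (intro exI allI impI)
      fix n assume "N + N \<le> n"
      hence "norm ((S1 ^^ n) x) \<le> norm ((S1 ^^ (N + N)) x)" by (rule dec)
      also have "\<dots> = norm ((S ^^ N) x)" by (rule eqn)
      finally show "norm ((S1 ^^ n) x - 0) < r" using N[of N] by simp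
    qed
  qed
  thus ?thesis unfolding pure_isometry_def using iso1 adj1 by blast
qed

theorem corollary5p5:
  fixes V1 V2 :: "'a::{real_inner, complete_space} \<Rightarrow> 'a"
  assumes "isometry V1" and "isometry V2"
    and "V1 \<circ> V2 = V2 \<circ> V1"
    and "range V1 = range V2"
    and "pure_isometry (V1 \<circ> V2)"
  shows "pure_isometry V1 \<and> pure_isometry V2"
proof
  show "pure_isometry V1" using pure_one assms by blast
  show "pure_isometry V2" using pure_one[of V2 V1] assms by simp
qed

end
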